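(* Let $w,v$ be fixed complex numbers with $\mathrm{Re}(w)\leq1$ and $w\neq1$. Then for every integer $R\geq1$, as real $n\to\infty$, \[ S_n(w;v)=U_0(w;v)+\frac{U_1(w;v)}{n}+\cdots+\frac{U_{R-1}(w;v)}{n^{R-1}}+O\!\left(\frac{1}{n^R}\right), \] with an implied constant depending only on $w$, $v$ and $R$.
   Context: For real $n>0$ with $\mathrm{Re}(n+v)>-1$, $S_n(w;v)=1+nw\int_0^1 e^{nw(1-z)}z^{n+v}\,dz$ (for integers $n\geq1$, $n+v\geq0$, $w\neq0$ it satisfies $e^{nw}=\sum_{j=0}^{n+v-1}\frac{(nw)^j}{j!}+\frac{(nw)^{n+v}}{(n+v)!}S_n(w;v)$). De Moivre polynomial $\mathcal{A}_{n,k}(a_1,a_2,\dots)$: coefficient of $x^n$ in $(a_1x+a_2x^2+\cdots)^k$. $\binom{v}{j}=v(v-1)\cdots(v-j+1)/j!$; $\delta_{r,0}$ Kronecker delta. $U_r(w;v)=\delta_{r,0}-\sum_{m=0}^{r}(-1)^m\binom{v}{r-m}\sum_{k=0}^{m}\frac{w}{(w-1)^{r+k+1}}\frac{(r+k)!}{k!}\mathcal{A}_{m,k}(\frac12,\frac13,\frac14,\dots)$. *)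

theory Defs
  imports "HOL-Analysis.Analysis" "HOL-Computational_Algebra.Formal_Power_Series"
    "HOL-Library.Landau_Symbols"
begin

definition S_fun :: "real \<Rightarrow> complex \<Rightarrow> complex \<Rightarrow> complex" where
  "S_fun n w v = 1 + of_real n * w *
     integral {0..1} (\<lambda>z::real. exp (of_real n * w * (1 - of_real z)) * (of_real z) powr (of_real n + v))"

definition demoivre :: "(nat \<Rightarrow> 'a::comm_ring_1) \<Rightarrow> nat \<Rightarrow> nat \<Rightarrow> 'a" where
  "demoivre a m k = fps_nth ((Abs_fps (\<lambda>j. if j = 0 then 0 else a j)) ^ k) m"

definition U_fun :: "nat \<Rightarrow> complex \<Rightarrow> complex \<Rightarrow> complex" where
  "U_fun r w v = (if r = 0 then 1 else 0) -
     (\<Sum>m=0..r. (-1)^m * (v gchoose (r - m)) *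
        (\<Sum>k=0..m. w / (w - 1) ^ (r + k + 1) * (of_nat (fact (r + k)) / of_nat (fact k))
                    * demoivre (\<lambda>j. 1 / (of_nat j + 1)) m k))"

end

theory Submission
  imports Defs "HOL-Computational_Algebra.Polynomial_FPS"
begin

unbundle no vec_syntax
notation fps_nth (infixl "$" 75)



definition Cf :: "complex fps" where "Cf = Abs_fps (\<lambda>j. 1 / (of_nat j + 2))"
definition Af :: "complex fps" where "Af = fps_X^2 * Cf"
definition Gf :: "complex \<Rightarrow> complex fps" where "Gf v = Abs_fps (\<lambda>i. (-1)^i * (v gchoose i))"
definition Onesf :: "complex fps" where "Onesf = Abs_fps (\<lambda>_. 1)"

lemma Af_nth: "Af $ j = (if j < 2 then 0 else 1 / of_nat j)"
  by (simp add: Af_def Cf_def fps_X_power_mult_nth)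

lemma Af_deriv: "fps_deriv Af = fps_X * Onesf"
proof (rule fps_ext)
  fix n
  have nz: "(1 + of_nat n :: complex) \<noteq> 0"
    by (metis add.commute of_nat_Suc of_nat_eq_0_iff nat.simps(3))
  show "fps_deriv Af $ n = (fps_X * Onesf) $ n"
    using nz by (auto simp: Af_nth Onesf_def field_simps)
qed

lemma Af_deriv_mult: "fps_deriv Af * (1 - fps_X) = fps_X"
proof -
  have "Onesf * (1 - fps_X) = 1"
    by (rule fps_ext) (auto simp: Onesf_def algebra_simps)
  then show ?thesis by (simp add: Af_deriv mult.assoc)
qed

lemma Af_pow_vanish: "j < 2*k \<Longrightarrow> (Af^k * h) $ j = 0"
proof -
  assume "j < 2*k"
  have "Af^k = fps_X^(2*k) * Cf^k"
    unfolding Af_def power_mult_distrib power_mult ..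
  then have eq: "Af^k * h = fps_X^(2*k) * (Cf^k * h)" by (metis mult.assoc)
  show ?thesis using \<open>j < 2*k\<close> unfolding eq fps_X_power_mult_nth by simp
qed

lemma Af_pow_vanish': "j < 2*k + 1 \<Longrightarrow> (Af^k * fps_deriv Af * h) $ j = 0"
proof -
  assume "j < 2*k+1"
  have "Af^k = fps_X^(2*k) * Cf^k"
    unfolding Af_def power_mult_distrib power_mult ..
  then have eq: "Af^k * fps_deriv Af * h = fps_X^(2*k+1) * (Cf^k * Onesf * h)"
    unfolding Af_deriv by (simp add: mult_ac)
  show ?thesis using \<open>j < 2*k+1\<close> unfolding eq fps_X_power_mult_nth by simp
qed

lemma Gf_deriv: "fps_deriv (Gf v) * (1 - fps_X) = - fps_const v * Gf v"
proof (rule fps_ext)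
  fix i
  have "(fps_deriv (Gf v) * (1 - fps_X)) $ i
     = of_nat (i+1) * ((-1)^(i+1) * (v gchoose (i+1))) - (if i = 0 then 0 else of_nat i * ((-1)^i * (v gchoose i)))"
    by (cases i) (simp_all add: Gf_def algebra_simps)
  also have "\<dots> = (-1)^(i+1) * (of_nat (Suc i) * (v gchoose Suc i) + of_nat i * (v gchoose i))"
    by (cases i) (simp_all add: algebra_simps)
  also have "\<dots> = (-1)^(i+1) * (v * (v gchoose i))"
    by (simp add: gbinomial_mult_1)
  also have "\<dots> = (- fps_const v * Gf v) $ i" by (simp add: Gf_def)
  finally show "(fps_deriv (Gf v) * (1 - fps_X)) $ i = (- fps_const v * Gf v) $ i" .
qed

lemma aux_div: "(y::complex) \<noteq> 0 \<Longrightarrow> c * (y*a + b) / (y^(n+2)) = c*a/y^(n+1) + c*b/y^(n+2)"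
  by (simp add: field_simps)

definition Lam :: "complex \<Rightarrow> nat \<Rightarrow> nat \<Rightarrow> complex fps \<Rightarrow> complex" where
  "Lam w N r h = (\<Sum>k=0..N. (-1)^k * fact (r+k) / fact k * (Af^k * h) $ (r+k) / (1-w)^(r+k+1))"

lemma Lam_N: assumes "N \<ge> r" shows "Lam w N r h = Lam w r r h"
proof -
  have "Lam w N r h = (\<Sum>k=0..r. (-1)^k * fact (r+k) / fact k * (Af^k * h) $ (r+k) / (1-w)^(r+k+1))"
    unfolding Lam_def
    by (rule sum.mono_neutral_right) (use assms in \<open>auto simp: Af_pow_vanish\<close>)
  then show ?thesis by (simp add: Lam_def)
qed

definition Psi :: "complex \<Rightarrow> complex fps" where "Psi w = fps_const (1-w) + fps_deriv Af"

lemma Lam_key: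
  assumes "w \<noteq> 1"
  shows "Lam w (Suc r) (Suc r) (Psi w * u) = Lam w (Suc r) r (fps_deriv u)"
proof -
  define s where "s k = ((-1)^k :: complex)" for k :: nat
  define b where "b k = (Af^k * fps_deriv Af * u) $ (r+1+k)" for k
  define a where "a k = (Af^k * u) $ (r+1+k)" for k
  have w1: "1 - w \<noteq> 0" using assms by simp
  have L: "Lam w (Suc r) (Suc r) (Psi w * u) =
      (\<Sum>k=0..Suc r. s k * fact (r+1+k) / fact k * a k / (1-w)^(r+k+1)) +
      (\<Sum>k=0..Suc r. s k * fact (r+1+k) / fact k * b k / (1-w)^(r+k+2))"
  proof -
    have "Af^k * (Psi w * u) = fps_const (1-w) * (Af^k * u) + Af^k * fps_deriv Af * u" for k
      by (simp add: Psi_def algebra_simps)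
    then have eq: "(Af^k * (Psi w * u)) $ (Suc r+k) = (1-w) * a k + b k" for k
      by (simp add: a_def b_def)
    have "(-1)^k * fact (Suc r+k) / fact k * (Af^k * (Psi w * u)) $ (Suc r+k) / (1-w)^(Suc r+k+1)
        = s k * fact (r+1+k) / fact k * a k / (1-w)^(r+k+1) + s k * fact (r+1+k) / fact k * b k / (1-w)^(r+k+2)" for k
    proof -
      have "(-1)^k * fact (Suc r+k) / fact k * (Af^k * (Psi w * u)) $ (Suc r+k) / (1-w)^(Suc r+k+1)
          = s k * fact (r+1+k) / fact k * ((1-w) * a k + b k) / (1-w)^(r+k+2)"
        unfolding eq s_def by simp
      also have "\<dots> = s k * fact (r+1+k) / fact k * a k / (1-w)^(r+k+1) + s k * fact (r+1+k) / fact k * b k / (1-w)^(r+k+2)"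
        by (rule aux_div[OF w1])
      finally show ?thesis .
    qed
    then show ?thesis unfolding Lam_def
      by (simp add: sum.distrib[symmetric])
  qed
  have R: "Lam w (Suc r) r (fps_deriv u) =
      (\<Sum>k=0..Suc r. s k * fact (r+1+k) / fact k * a k / (1-w)^(r+k+1)) -
      (\<Sum>k=0..Suc r. s k * fact (r+k) / fact k * of_nat k * (Af^(k-1) * fps_deriv Af * u) $ (r+k) / (1-w)^(r+k+1))"
  proof -
    have d: "Af^k * fps_deriv u = fps_deriv (Af^k * u) - fps_const (of_nat k) * (Af^(k-1) * fps_deriv Af * u)" for k
      by (simp add: fps_deriv_power algebra_simps)
    have e: "(Af^k * fps_deriv u) $ (r+k) = of_nat (r+k+1) * a k - of_nat k * (Af^(k-1) * fps_deriv Af * u) $ (r+k)" for k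
    proof -
      have "(Af^k * fps_deriv u) $ (r+k) = fps_deriv (Af^k * u) $ (r+k) - (fps_const (of_nat k) * (Af^(k-1) * fps_deriv Af * u)) $ (r+k)"
        by (subst d) (rule fps_sub_nth)
      also have "\<dots> = of_nat (r+k+1) * a k - of_nat k * (Af^(k-1) * fps_deriv Af * u) $ (r+k)"
        unfolding fps_deriv_nth fps_mult_left_const_nth a_def by (simp add: add_ac)
      finally show ?thesis .
    qed
    have f: "fact (r+k) * of_nat (r+k+1) = (fact (r+1+k) :: complex)" for k
      by (simp add: algebra_simps)
    have t: "(-1)^k * fact (r+k) / fact k * (Af^k * fps_deriv u) $ (r+k) / (1-w)^(r+k+1)
       = s k * fact (r+1+k) / fact k * a k / (1-w)^(r+k+1) -
         s k * fact (r+k) / fact k * of_nat k * (Af^(k-1) * fps_deriv Af * u) $ (r+k) / (1-w)^(r+k+1)" for k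
      unfolding e f[symmetric] s_def by (simp add: diff_divide_distrib right_diff_distrib mult_ac)
    show ?thesis unfolding Lam_def t by (rule sum_subtractf)
  qed
  have "(\<Sum>k=0..Suc r. s k * fact (r+k) / fact k * of_nat k * (Af^(k-1) * fps_deriv Af * u) $ (r+k) / (1-w)^(r+k+1))
      = (\<Sum>k=0..r. s (Suc k) * fact (r+Suc k) / fact (Suc k) * of_nat (Suc k) * b k / (1-w)^(r+Suc k+1))"
    by (subst sum.atLeast0_atMost_Suc_shift) (simp add: b_def add_ac del: of_nat_Suc fact_Suc)
  also have "\<dots> = - (\<Sum>k=0..r. s k * fact (r+1+k) / fact k * b k / (1-w)^(r+k+2))"
  proof -
    have "s (Suc k) * fact (r+Suc k) / fact (Suc k) * of_nat (Suc k) * b k / (1-w)^(r+Suc k+1)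
       = - (s k * fact (r+1+k) / fact k * b k / (1-w)^(r+k+2))" for k
    proof -
      have fk: "(fact k :: complex) \<noteq> 0" by simp
      have "fact (Suc k) = (of_nat (Suc k) * fact k :: complex)" by simp
      then show ?thesis using fk unfolding s_def
        by (simp add: field_simps add_ac del: of_nat_Suc fact_Suc)
    qed
    then show ?thesis by (simp add: sum_negf[symmetric])
  qed
  also have "\<dots> = - (\<Sum>k=0..Suc r. s k * fact (r+1+k) / fact k * b k / (1-w)^(r+k+2))"
  proof -
    have "b (Suc r) = 0" unfolding b_def by (rule Af_pow_vanish') simp
    then show ?thesis by simp
  qed
  finally show ?thesis using L R by simp
qed




definition Lf :: "complex \<Rightarrow> complex fps" where "Lf w = fps_const (1-w) + fps_const w * fps_X"
definition Li :: "complex \<Rightarrow> complex fps" where "Li w = inverse (Lf w)"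
definition Psiinv :: "complex \<Rightarrow> complex fps" where "Psiinv w = (1 - fps_X) * Li w"
definition Dop :: "complex \<Rightarrow> complex fps \<Rightarrow> complex fps" where "Dop w h = fps_deriv (h * Psiinv w)"

lemma Lf0: "Lf w $ 0 = 1 - w" by (simp add: Lf_def)

lemma Lf_Li: "w \<noteq> 1 \<Longrightarrow> Lf w * Li w = 1"
  unfolding Li_def by (rule inverse_mult_eq_1') (simp add: Lf0)

lemma Li_deriv: "w \<noteq> 1 \<Longrightarrow> fps_deriv (Li w) = - fps_const w * (Li w)^2"
  unfolding Li_def by (subst fps_inverse_deriv) (simp_all add: Lf0 Lf_def)

lemma Psi_Psiinv: assumes "w \<noteq> 1" shows "Psi w * Psiinv w = 1"
proof -
  have "Psi w * (1 - fps_X) = Lf w"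
  proof -
    have "Psi w * (1 - fps_X) = fps_const (1-w) * (1 - fps_X) + fps_X"
      unfolding Psi_def distrib_right Af_deriv_mult ..
    also have "\<dots> = Lf w" unfolding Lf_def fps_const_sub by (simp add: algebra_simps)
    finally show ?thesis .
  qed
  then have "Psi w * Psiinv w = Lf w * Li w" unfolding Psiinv_def by (simp add: mult.assoc[symmetric])
  then show ?thesis using Lf_Li[OF assms] by simp
qed

lemma Lam_step: assumes "w \<noteq> 1" shows "Lam w (Suc r) (Suc r) h = Lam w r r (Dop w h)"
proof -
  have e: "Psi w * (h * Psiinv w) = h" using Psi_Psiinv[OF assms] by (metis mult.left_commute mult_1_right)
  have "Lam w (Suc r) (Suc r) h = Lam w (Suc r) (Suc r) (Psi w * (h * Psiinv w))" unfolding e ..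
  also have "\<dots> = Lam w (Suc r) r (fps_deriv (h * Psiinv w))"
    by (rule Lam_key[OF assms])
  also have "\<dots> = Lam w r r (Dop w h)" unfolding Dop_def by (rule Lam_N) simp
  finally show ?thesis .
qed

lemma Lam_iter: assumes "w \<noteq> 1" shows "Lam w r r h = Lam w 0 0 ((Dop w ^^ r) h)"
proof (induction r arbitrary: h)
  case 0 then show ?case by simp
next
  case (Suc r)
  show ?case using Lam_step[OF assms] Suc by (simp add: funpow_Suc_right del: funpow.simps)
qed

lemma Lam_00: "Lam w 0 0 h = h $ 0 / (1 - w)" by (simp add: Lam_def)

definition Tp :: "complex \<Rightarrow> complex \<Rightarrow> nat \<Rightarrow> complex poly \<Rightarrow> complex poly" where
  "Tp w v m p = smult (v+1) (p * [:1-w, w:]) - [:1,-1:] * (pderiv p * [:1-w,w:] - smult (of_nat (m+1) * w) p)"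

primrec Pp :: "complex \<Rightarrow> complex \<Rightarrow> nat \<Rightarrow> complex poly" where
  "Pp w v 0 = 1"
| "Pp w v (Suc k) = Tp w v (2*k) (Pp w v k)"

lemma fps_of_poly_lin: "fps_of_poly [:a::complex, b:] = fps_const a + fps_const b * fps_X"
proof (rule fps_ext)
  fix n show "fps_of_poly [:a, b:] $ n = (fps_const a + fps_const b * fps_X) $ n"
    by (cases n) (auto simp: coeff_pCons fps_X_def split: nat.split)
qed

lemma Dop_poly:
  assumes "w \<noteq> 1"
  shows "Dop w (Gf v * fps_of_poly p * Li w ^ m) = - (Gf v * fps_of_poly (Tp w v m p) * Li w ^ (m+2))"
proof -
  define G where "G = Gf v"
  define P where "P = fps_of_poly p"
  define I where "I = Li w"
  define L where "L = Lf w"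
  define J where "J = I^m"
  have LI: "L * I = 1" using Lf_Li[OF assms] by (simp add: L_def I_def)
  have dI: "fps_deriv I = - fps_const w * I^2" using Li_deriv[OF assms] by (simp add: I_def)
  have dG: "fps_deriv G * (1 - fps_X) = - fps_const v * G" using Gf_deriv by (simp add: G_def)
  have dJ: "fps_deriv J = fps_const (of_nat m) * fps_deriv I * I^(m-1)"
    unfolding J_def by (rule fps_deriv_power)
  have dJ': "fps_deriv J * I = - fps_const (of_nat m * w) * J * I * I"
  proof (cases m)
    case 0 then show ?thesis by (simp add: dJ J_def)
  next
    case (Suc m')
    have "fps_deriv J * I = fps_const (of_nat m) * (- fps_const w * (I * I)) * I^m' * I"
      unfolding dJ dI Suc power2_eq_square by simp
    also have "\<dots> = - fps_const (of_nat m * w) * J * I * I"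
      unfolding J_def Suc fps_const_mult power_Suc2 by (simp add: algebra_simps)
    finally show ?thesis .
  qed
  have H: "fps_deriv (G * (1 - fps_X)) = - fps_const (v + 1) * G"
  proof -
    have "fps_deriv (G * (1 - fps_X)) = fps_deriv G * (1 - fps_X) - G" by (simp add: algebra_simps)
    also have "\<dots> = - fps_const (v + 1) * G" unfolding dG fps_const_add[symmetric] fps_const_1_eq_1
      by (simp only: distrib_right minus_add_distrib mult_minus_left mult_1_left diff_conv_add_uminus)
    finally show ?thesis .
  qed
  have "Dop w (G * P * J) = fps_deriv ((G * (1 - fps_X)) * (P * J * I))"
    by (simp add: Dop_def Psiinv_def I_def mult_ac)
  also have "\<dots> = - fps_const (v + 1) * G * (P * J * I) + G * (1 - fps_X) *
      (fps_deriv P * J * I - fps_const (of_nat (m+1) * w) * P * J * I * I)"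
  proof -
    have "fps_deriv (P * J * I) = fps_deriv P * J * I + P * (fps_deriv J * I) + P * J * fps_deriv I"
      by (simp add: algebra_simps)
    also have "\<dots> = fps_deriv P * J * I - fps_const (of_nat (m+1) * w) * P * J * I * I"
    proof -
      have c: "fps_const (of_nat (m+1) * w) = fps_const (of_nat m * w) + fps_const w"
        by (simp add: algebra_simps)
      show ?thesis unfolding dJ' dI power2_eq_square c
        by (simp add: algebra_simps del: fps_const_add fps_const_mult fps_const_neg)
    qed
    finally have dQ: "fps_deriv (P * J * I) = fps_deriv P * J * I - fps_const (of_nat (m+1) * w) * P * J * I * I" .
    show ?thesis unfolding fps_deriv_mult[of "G * (1 - fps_X)" "P * J * I"] dQ H
      by (simp add: algebra_simps del: fps_const_add fps_const_mult fps_const_neg)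
  qed
  also have "\<dots> = - (G * fps_of_poly (Tp w v m p) * (J * I * I))"
  proof -
    have T: "fps_of_poly (Tp w v m p) = fps_const (v+1) * (P * L) - (1 - fps_X) * (fps_deriv P * L - fps_const (of_nat (m+1) * w) * P)"
      unfolding Tp_def P_def L_def Lf_def fps_of_poly_diff fps_of_poly_mult fps_of_poly_smult fps_of_poly_lin fps_of_poly_pderiv
      by (simp add: fps_const_neg[symmetric] del: fps_const_neg)
    have "fps_of_poly (Tp w v m p) * (J * I * I) = fps_const (v+1) * P * J * I * (L * I) -
        (1 - fps_X) * (fps_deriv P * J * I * (L * I) - fps_const (of_nat (m+1) * w) * P * J * I * I)"
      unfolding T by (simp add: algebra_simps)
    then have "fps_of_poly (Tp w v m p) * (J * I * I) = fps_const (v+1) * P * J * I -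
        (1 - fps_X) * (fps_deriv P * J * I - fps_const (of_nat (m+1) * w) * P * J * I * I)"
      unfolding LI by simp
    then have "G * fps_of_poly (Tp w v m p) * (J * I * I) = G * (fps_const (v+1) * P * J * I -
        (1 - fps_X) * (fps_deriv P * J * I - fps_const (of_nat (m+1) * w) * P * J * I * I))"
      by (metis mult.assoc)
    then show ?thesis by (simp add: algebra_simps del: fps_const_add fps_const_mult fps_const_neg)
  qed
  finally have X: "Dop w (G * P * J) = - (G * fps_of_poly (Tp w v m p) * (J * I * I))" .
  have e: "Li w ^ (m+2) = J * I * I" unfolding J_def I_def by (simp only: add_2_eq_Suc' power_Suc2)
  show ?thesis using X unfolding e G_def P_def J_def I_def .
qed

lemma Dop_iter:
  assumes "w \<noteq> 1"
  shows "(Dop w ^^ k) (Gf v) = fps_const ((-1)^k) * (Gf v * fps_of_poly (Pp w v k) * Li w ^ (2*k))"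
proof (induction k)
  case 0 then show ?case by simp
next
  case (Suc k)
  have lin: "Dop w (fps_const c * h) = fps_const c * Dop w h" for c h
    by (simp add: Dop_def mult.assoc)
  have "(Dop w ^^ Suc k) (Gf v) = Dop w ((Dop w ^^ k) (Gf v))" by simp
  also have "\<dots> = fps_const ((-1)^k) * Dop w (Gf v * fps_of_poly (Pp w v k) * Li w ^ (2*k))"
    unfolding Suc lin ..
  also have "\<dots> = fps_const ((-1)^k) * (- (Gf v * fps_of_poly (Tp w v (2*k) (Pp w v k)) * Li w ^ (2*k+2)))"
    unfolding Dop_poly[OF assms] ..
  also have "\<dots> = fps_const ((-1)^Suc k) * (Gf v * fps_of_poly (Pp w v (Suc k)) * Li w ^ (2*Suc k))"
    by (simp add: fps_const_neg[symmetric] del: fps_const_neg)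
  finally show ?case .
qed

lemma Lam_Gf:
  assumes "w \<noteq> 1"
  shows "Lam w r r (Gf v) = (-1)^r * poly (Pp w v r) 0 / (1-w)^(2*r+1)"
proof -
  have "Lam w r r (Gf v) = ((Dop w ^^ r) (Gf v)) $ 0 / (1-w)" by (simp add: Lam_iter[OF assms] Lam_00)
  also have "\<dots> = (-1)^r * poly (Pp w v r) 0 / (1-w)^(2*r+1)"
    unfolding Dop_iter[OF assms]
    by (simp add: Gf_def Li_def Lf0 poly_0_coeff_0 fps_nth_power_0 power_inverse field_simps)
  finally show ?thesis .
qed




definition Bf :: "complex fps" where "Bf = Abs_fps (\<lambda>j. if j = 0 then 0 else 1 / (of_nat j + 1))"

lemma Bf_eq: "Bf = fps_X * Cf"
proof (rule fps_ext)
  fix j show "Bf $ j = (fps_X * Cf) $ j"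
    by (cases j) (simp_all add: Bf_def Cf_def add_ac)
qed

lemma dm_Bf: "demoivre (\<lambda>j. 1 / (of_nat j + 1)) m k = (Bf ^ k) $ m"
  unfolding demoivre_def Bf_def by simp

lemma Bf_pow_vanish: "m < k \<Longrightarrow> (Bf ^ k) $ m = 0"
  unfolding Bf_eq power_mult_distrib fps_X_power_mult_nth by simp

lemma Af_pow_nth: "(Af ^ k * h) $ (r + k) = (Bf^k * h) $ r"
proof -
  have "Af ^ k = fps_X ^ k * Bf ^ k"
    unfolding Af_def Bf_eq power_mult_distrib power2_eq_square by (simp add: mult_ac)
  then have eq: "Af ^ k * h = fps_X ^ k * (Bf ^ k * h)" by (metis mult.assoc)
  show ?thesis unfolding eq fps_X_power_mult_nth by simp
qed

lemma C_aux:
  fixes Y w F d Cv :: complex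
  assumes "(-1::complex)^m * (-1)^n = (-1)^k * (-1)^p"
  shows "- ((-1)^m * Cv * (w / ((-1)^(n+1) * Y) * F * d)) = w * (-1)^k * F * (d * ((-1)^p * Cv)) / Y"
proof -
  have i: "1 / ((-1::complex)^(n+1) * Y) = - ((-1)^n / Y)"
    by (cases "even n") (simp_all add: divide_simps)
  have "- ((-1)^m * Cv * (w / ((-1)^(n+1) * Y) * F * d)) = - ((-1)^m * Cv * (w * (1 / ((-1)^(n+1) * Y)) * F * d))"
    by simp
  also have "\<dots> = ((-1)^m * (-1)^n) * (Cv * w * F * d) / Y" unfolding i by (simp add: algebra_simps)
  also have "\<dots> = w * (-1)^k * F * (d * ((-1)^p * Cv)) / Y" unfolding assms by (simp add: algebra_simps)
  finally show ?thesis .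
qed

lemma U_Lam:
  assumes "w \<noteq> 1"
  shows "U_fun r w v = (if r = 0 then 1 else 0) + w * Lam w r r (Gf v)"
proof -
  define d where "d m k = (Bf ^ k) $ m" for m k
  define F where "F k = (fact (r + k) / fact k :: complex)" for k
  have w1: "1 - w \<noteq> 0" using assms by simp
  have A: "(\<Sum>m=0..r. (-1)^m * (v gchoose (r - m)) *
        (\<Sum>k=0..m. w / (w - 1) ^ (r + k + 1) * (of_nat (fact (r + k)) / of_nat (fact k))
                    * demoivre (\<lambda>j. 1 / (of_nat j + 1)) m k))
      = (\<Sum>m=0..r. \<Sum>k=0..r. (-1)^m * (v gchoose (r - m)) * (w / (w - 1) ^ (r + k + 1) * F k * d m k))"
  proof (rule sum.cong[OF refl])
    fix m assume m: "m \<in> {0..r}"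
    have "(\<Sum>k=0..m. w / (w - 1) ^ (r + k + 1) * (of_nat (fact (r + k)) / of_nat (fact k))
                    * demoivre (\<lambda>j. 1 / (of_nat j + 1)) m k) = (\<Sum>k=0..r. w / (w - 1) ^ (r + k + 1) * F k * d m k)"
    proof -
      have "(\<Sum>k=0..m. w / (w - 1) ^ (r + k + 1) * (of_nat (fact (r + k)) / of_nat (fact k))
                    * demoivre (\<lambda>j. 1 / (of_nat j + 1)) m k) = (\<Sum>k=0..m. w / (w - 1) ^ (r + k + 1) * F k * d m k)"
        by (rule sum.cong) (simp_all add: F_def d_def dm_Bf)
      also have "\<dots> = (\<Sum>k=0..r. w / (w - 1) ^ (r + k + 1) * F k * d m k)"
        by (rule sum.mono_neutral_left) (use m in \<open>auto simp: d_def Bf_pow_vanish\<close>)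
      finally show ?thesis .
    qed
    then show "(-1)^m * (v gchoose (r - m)) *
        (\<Sum>k=0..m. w / (w - 1) ^ (r + k + 1) * (of_nat (fact (r + k)) / of_nat (fact k))
                    * demoivre (\<lambda>j. 1 / (of_nat j + 1)) m k)
      = (\<Sum>k=0..r. (-1)^m * (v gchoose (r - m)) * (w / (w - 1) ^ (r + k + 1) * F k * d m k))"
      by (simp add: sum_distrib_left)
  qed
  have B: "w * Lam w r r (Gf v) = (\<Sum>k=0..r. \<Sum>m=0..r. w * (-1)^k * F k * (d m k * ((-1)^(r-m) * (v gchoose (r-m)))) / (1-w)^(r+k+1))"
  proof -
    have "(Af ^ k * Gf v) $ (r + k) = (\<Sum>m=0..r. d m k * ((-1)^(r-m) * (v gchoose (r-m))))" for k
      unfolding Af_pow_nth unfolding fps_mult_nth d_def by (simp add: Gf_def)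
    then show ?thesis unfolding Lam_def F_def
      by (simp add: sum_distrib_left sum_divide_distrib mult_ac)
  qed
  have C: "- ((-1)^m * (v gchoose (r - m)) * (w / (w - 1) ^ (r + k + 1) * F k * d m k))
      = w * (-1)^k * F k * (d m k * ((-1)^(r-m) * (v gchoose (r-m)))) / (1-w)^(r+k+1)" if "m \<le> r" for m k
  proof -
    have p1: "(w - 1) ^ (r + k + 1) = (-1)^(r+k+1) * (1 - w)^(r+k+1)"
    proof -
      have "(w - 1) ^ (r + k + 1) = (- (1 - w)) ^ (r + k + 1)" by simp
      also have "\<dots> = (-1)^(r+k+1) * (1 - w)^(r+k+1)" by (rule power_minus)
      finally show ?thesis .
    qed
    have p2: "((-1)::complex)^(r-m) = (-1)^(r+m)"
    proof -
      have e2: "r + m = (r - m) + 2*m" using that by simp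
      show ?thesis unfolding e2 power_add power_mult by simp
    qed
    have p3: "((-1)::complex)^m * (-1)^(r+k) = (-1)^k * (-1)^(r+m)"
      by (simp add: power_add)
    show ?thesis unfolding p1 p2 by (rule C_aux[OF p3])
  qed
  have "U_fun r w v = (if r = 0 then 1 else 0) - (\<Sum>k=0..r. \<Sum>m=0..r. (-1)^m * (v gchoose (r - m)) * (w / (w - 1) ^ (r + k + 1) * F k * d m k))"
    unfolding U_fun_def A by (subst sum.swap) simp
  also have "\<dots> = (if r = 0 then 1 else 0) + (\<Sum>k=0..r. \<Sum>m=0..r. - ((-1)^m * (v gchoose (r - m)) * (w / (w - 1) ^ (r + k + 1) * F k * d m k)))"
    by (simp add: sum_negf)
  also have "\<dots> = (if r = 0 then 1 else 0) + w * Lam w r r (Gf v)"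
    unfolding B by (intro arg_cong2[where f="(+)"] refl sum.cong C) auto
  finally show ?thesis .
qed



lemma denom_nz:
  assumes "Re w \<le> 1" "w \<noteq> 1" "0 \<le> z" "z \<le> 1"
  shows "1 - w * complex_of_real z \<noteq> 0"
proof
  assume h: "1 - w * complex_of_real z = 0"
  then have e: "w * complex_of_real z = 1" by simp
  have re: "Re w * z = 1" using arg_cong[OF e, of Re] by simp
  have im: "Im w * z = 0" using arg_cong[OF e, of Im] by simp
  have "Re w * z \<le> 1 * z" using assms(1,3) by (intro mult_right_mono) auto
  then have z1: "z = 1" using re assms(4) by simp
  then have "Re w = 1" "Im w = 0" using re im by simp_all
  then have "w = 1" by (simp add: complex_eq_iff)
  with assms(2) show False by simp
qed

definition qf :: "complex \<Rightarrow> complex \<Rightarrow> nat \<Rightarrow> complex \<Rightarrow> complex" where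
  "qf w v k t = poly (Pp w v k) (1 - t) / (1 - w * t) ^ (2 * k)"

definition ig :: "real \<Rightarrow> complex \<Rightarrow> complex \<Rightarrow> nat \<Rightarrow> real \<Rightarrow> complex" where
  "ig n w v k z = exp (of_real n * w * (1 - of_real z)) * (of_real z) powr (of_real n + v) * qf w v k (of_real z)"

definition Fa :: "real \<Rightarrow> complex \<Rightarrow> complex \<Rightarrow> nat \<Rightarrow> real \<Rightarrow> complex" where
  "Fa n w v k z = exp (of_real n * w * (1 - of_real z)) * (of_real z) powr (of_real n + v + 1)
      * (poly (Pp w v k) (1 - of_real z) / (1 - w * of_real z) ^ (2 * k + 1))"

lemma cont_powr_01:
  assumes "Re c > 0"
  shows "continuous_on {0..1::real} (\<lambda>z. (complex_of_real z) powr c)"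
  by (intro continuous_intros) (use assms in auto)

lemma cont_qf:
  assumes "Re w \<le> 1" "w \<noteq> 1"
  shows "continuous_on {0..1::real} (\<lambda>z. poly p (1 - complex_of_real z) / (1 - w * complex_of_real z) ^ m)"
  by (intro continuous_intros) (use denom_nz[OF assms] in auto)

lemma cont_ig:
  assumes "Re w \<le> 1" "w \<noteq> 1" "n + Re v > 0"
  shows "continuous_on {0..1} (ig n w v k)"
  unfolding ig_def qf_def
  by (intro continuous_intros cont_qf cont_powr_01 assms) (use assms in auto)

lemma cont_Fa:
  assumes "Re w \<le> 1" "w \<noteq> 1" "n + Re v > 0"
  shows "continuous_on {0..1} (Fa n w v k)"
  unfolding Fa_def
  by (intro continuous_intros cont_qf cont_powr_01 assms) (use assms in auto)



lemma alg_deriv: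
  fixes E T t P P' n v w :: complex and m :: nat
  assumes D: "1 - w * t \<noteq> 0"
  shows "(- (n * w) * E * (T * t) + (n + v + 1) * T * E) * (P / (1 - w*t) ^ (m + 1)) +
     ((- P' * (1 - w*t) ^ (m + 1) - P * (of_nat (m + 1) * (- w * (1 - w*t) ^ m))) /
        ((1 - w*t) ^ (m + 1) * (1 - w*t) ^ (m + 1))) * (E * (T * t))
   = n * (E * T * (P / (1 - w*t) ^ m)) +
     E * T * (((v + 1) * P * (1 - w*t) - t * (P' * (1 - w*t) - of_nat (m + 1) * w * P)) / (1 - w*t) ^ (m + 2))"
proof -
  define D where "D = 1 - w * t"
  have D0: "D \<noteq> 0" using assms by (simp add: D_def)
  have wt: "w * t = 1 - D" by (simp add: D_def)
  show ?thesis unfolding D_def[symmetric]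
    using D0 by (simp add: field_simps power_add) (simp add: D_def algebra_simps)
qed

lemma poly_Tp: "poly (Tp w v m p) (1 - t) = (v + 1) * poly p (1 - t) * (1 - w*t)
    - t * (poly (pderiv p) (1 - t) * (1 - w*t) - of_nat (m + 1) * w * poly p (1 - t))"
  by (simp add: Tp_def algebra_simps)

lemma Fc_deriv:
  fixes t :: complex
  assumes t: "t \<notin> \<real>\<^sub>\<le>\<^sub>0" and D: "1 - w * t \<noteq> 0"
  shows "((\<lambda>t. exp (of_real n * w * (1 - t)) * t powr (of_real n + v + 1)
      * (poly p (1 - t) / (1 - w * t) ^ (m + 1))) has_field_derivative
     (of_real n * (exp (of_real n * w * (1 - t)) * t powr (of_real n + v) * (poly p (1 - t) / (1 - w * t) ^ m))
      + exp (of_real n * w * (1 - t)) * t powr (of_real n + v) * (poly (Tp w v m p) (1 - t) / (1 - w * t) ^ (m + 2)))) (at t)"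
proof -
  have t0: "t \<noteq> 0" using t by auto
  have dE: "((\<lambda>t. exp (of_real n * w * (1 - t))) has_field_derivative (- (of_real n * w) * exp (of_real n * w * (1 - t)))) (at t)"
    by (auto intro!: derivative_eq_intros)
  have dT: "((\<lambda>t. t powr (of_real n + v + 1)) has_field_derivative ((of_real n + v + 1) * t powr (of_real n + v))) (at t)"
    using has_field_derivative_powr[OF t, of "of_real n + v + 1"] by simp
  have d1: "((\<lambda>t. 1 - t) has_field_derivative (-1)) (at t)"
    by (auto intro!: derivative_eq_intros)
  have dPol: "((\<lambda>t. poly p (1 - t)) has_field_derivative (- poly (pderiv p) (1 - t))) (at t)"
    using has_field_derivative_poly[OF d1, of p] by simp
  have dw: "((\<lambda>t. 1 - w * t) has_field_derivative (- w)) (at t)"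
    by (auto intro!: derivative_eq_intros)
  have dPow: "((\<lambda>t. (1 - w * t) ^ (m + 1)) has_field_derivative (of_nat (m + 1) * (- w * (1 - w * t) ^ m))) (at t)"
    using DERIV_power[OF dw, of "m + 1"] by simp
  have dQ: "((\<lambda>t. poly p (1 - t) / (1 - w * t) ^ (m + 1)) has_field_derivative
      ((- poly (pderiv p) (1 - t) * (1 - w*t) ^ (m + 1) - poly p (1 - t) * (of_nat (m + 1) * (- w * (1 - w*t) ^ m))) /
        ((1 - w*t) ^ (m + 1) * (1 - w*t) ^ (m + 1)))) (at t)"
    by (rule DERIV_divide[OF dPol dPow]) (use D in simp)
  note raw = DERIV_mult[OF DERIV_mult[OF dE dT] dQ]
  have pw: "t powr (of_real n + v + 1) = t powr (of_real n + v) * t" using t0 by (simp add: powr_add)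
  show ?thesis
    apply (rule DERIV_cong[OF raw])
    unfolding pw poly_Tp
    by (rule alg_deriv[OF D])
qed



lemma Fa_vderiv:
  assumes "Re w \<le> 1" "w \<noteq> 1" "0 < z" "z < 1"
  shows "(Fa n w v k has_vector_derivative (of_real n * ig n w v k z + ig n w v (Suc k) z)) (at z)"
proof -
  define t where "t = complex_of_real z"
  have t: "t \<notin> \<real>\<^sub>\<le>\<^sub>0" using assms(3) by (auto simp: t_def complex_nonpos_Reals_iff)
  have D: "1 - w * t \<noteq> 0" unfolding t_def by (rule denom_nz) (use assms in auto)
  have e: "Fa n w v k = (\<lambda>z. (\<lambda>t. exp (of_real n * w * (1 - t)) * t powr (of_real n + v + 1)
      * (poly (Pp w v k) (1 - t) / (1 - w * t) ^ (2*k + 1))) (complex_of_real z))"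
    by (rule ext) (simp add: Fa_def)
  have "(Fa n w v k has_vector_derivative
     (of_real n * (exp (of_real n * w * (1 - t)) * t powr (of_real n + v) * (poly (Pp w v k) (1 - t) / (1 - w * t) ^ (2*k)))
      + exp (of_real n * w * (1 - t)) * t powr (of_real n + v) * (poly (Tp w v (2*k) (Pp w v k)) (1 - t) / (1 - w * t) ^ (2*k + 2)))) (at z)"
    unfolding e t_def by (rule has_vector_derivative_real_field) (rule Fc_deriv[OF t[unfolded t_def] D[unfolded t_def]])
  then show ?thesis by (simp add: ig_def qf_def t_def)
qed

definition Kint :: "real \<Rightarrow> complex \<Rightarrow> complex \<Rightarrow> nat \<Rightarrow> complex" where
  "Kint n w v k = integral {0..1} (ig n w v k)"

definition acoef :: "complex \<Rightarrow> complex \<Rightarrow> nat \<Rightarrow> complex" where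
  "acoef w v k = poly (Pp w v k) 0 / (1 - w) ^ (2*k + 1)"

lemma ibp_step:
  assumes "Re w \<le> 1" "w \<noteq> 1" "n + Re v > 0"
  shows "of_real n * Kint n w v k + Kint n w v (Suc k) = acoef w v k"
proof -
  have "((\<lambda>z. of_real n * ig n w v k z + ig n w v (Suc k) z) has_integral (Fa n w v k 1 - Fa n w v k 0)) {0..1}"
    by (rule fundamental_theorem_of_calculus_interior)
       (use assms cont_Fa Fa_vderiv in auto)
  moreover have "Fa n w v k 1 - Fa n w v k 0 = acoef w v k"
    by (simp add: Fa_def acoef_def)
  moreover have "((\<lambda>z. of_real n * ig n w v k z + ig n w v (Suc k) z) has_integral
      (of_real n * Kint n w v k + Kint n w v (Suc k))) {0..1}"
    unfolding Kint_def
    by (intro has_integral_add has_integral_mult_right integrable_integral integrable_continuous_interval cont_ig assms)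
  ultimately show ?thesis using has_integral_unique by metis
qed

lemma ibp_iter:
  assumes "Re w \<le> 1" "w \<noteq> 1" "n + Re v > 0" "n > 0"
  shows "Kint n w v 0 = (\<Sum>k<N. (-1)^k * acoef w v k / (of_real n)^(k+1)) + (-1)^N * Kint n w v N / (of_real n)^N"
proof (induction N)
  case 0 then show ?case by simp
next
  case (Suc N)
  have n0: "(of_real n :: complex) \<noteq> 0" using assms(4) by simp
  have h: "acoef w v N = of_real n * Kint n w v N + Kint n w v (Suc N)"
    using ibp_step[OF assms(1-3), of N] by simp
  have "(-1)^N * Kint n w v N / (of_real n)^N
      = (-1)^N * acoef w v N / (of_real n)^(N+1) + (-1)^(Suc N) * Kint n w v (Suc N) / (of_real n)^(Suc N)"
    unfolding h using n0 by (simp add: field_simps)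
  then show ?case using Suc by simp
qed



lemma kernel_bound:
  assumes "Re w \<le> 1" "n \<ge> 0" "n + Re v \<ge> 0" "0 \<le> z" "z \<le> 1"
  shows "norm (exp (of_real n * w * (1 - of_real z)) * (complex_of_real z) powr (of_real n + v)) \<le> exp \<bar>Re v\<bar>"
proof (cases "z = 0")
  case True then show ?thesis by simp
next
  case False
  then have z0: "z > 0" using assms by simp
  have n1: "norm (exp (of_real n * w * (1 - of_real z))) = exp (n * Re w * (1 - z))"
    by (simp add: norm_exp_eq_Re)
  have n2: "norm ((complex_of_real z) powr (of_real n + v)) = exp ((n + Re v) * ln z)"
    using z0 by (simp add: norm_powr_real_powr powr_def)
  have a1: "n * Re w * (1 - z) \<le> n * (1 - z)"
    using assms mult_left_mono[of "Re w" 1 n] by (intro mult_right_mono) auto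
  have lz: "ln z \<le> z - 1" using z0 by (rule ln_le_minus_one)
  have a2: "(n + Re v) * ln z \<le> (n + Re v) * (z - 1)"
    using assms lz by (intro mult_left_mono) auto
  have a3: "Re v * (z - 1) \<le> \<bar>Re v\<bar>"
  proof -
    have "\<bar>Re v * (z - 1)\<bar> \<le> \<bar>Re v\<bar> * 1"
      unfolding abs_mult using assms by (intro mult_left_mono) auto
    then show ?thesis by simp
  qed
  have "n * Re w * (1 - z) + (n + Re v) * ln z \<le> \<bar>Re v\<bar>"
    using a1 a2 a3 by (simp add: algebra_simps)
  then show ?thesis
    unfolding norm_mult n1 n2 exp_add[symmetric] by simp
qed

lemma Kint_bound:
  assumes "Re w \<le> 1" "w \<noteq> 1"
  shows "\<exists>B. \<forall>n. n > 0 \<and> n + Re v > 0 \<longrightarrow> norm (Kint n w v k) \<le> B"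
proof -
  have "compact ((\<lambda>z. qf w v k (complex_of_real z)) ` {0..1})"
    by (rule compact_continuous_image) (use cont_qf[OF assms] in \<open>simp_all add: qf_def\<close>)
  then obtain C where C: "C > 0" "\<And>z. z \<in> {0..1} \<Longrightarrow> norm (qf w v k (complex_of_real z)) \<le> C"
    using compact_imp_bounded bounded_pos by (metis image_eqI)
  show ?thesis
  proof (intro exI allI impI)
    fix n :: real assume n: "n > 0 \<and> n + Re v > 0"
    have "norm (Kint n w v k) \<le> exp \<bar>Re v\<bar> * C * measure lborel (cbox 0 (1::real))"
    proof (rule has_integral_bound)
      show "0 \<le> exp \<bar>Re v\<bar> * C" using C by simp
      show "(ig n w v k has_integral Kint n w v k) (cbox 0 1)"
        unfolding Kint_def cbox_interval
        by (intro integrable_integral integrable_continuous_interval cont_ig) (use assms n in auto)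
      fix z assume z: "z \<in> cbox 0 (1::real)"
      have "norm (ig n w v k z) = norm (exp (of_real n * w * (1 - of_real z)) * (complex_of_real z) powr (of_real n + v))
          * norm (qf w v k (complex_of_real z))"
        by (simp add: ig_def norm_mult)
      also have "\<dots> \<le> exp \<bar>Re v\<bar> * C"
        by (intro mult_mono kernel_bound C(2)) (use assms n z in auto)
      finally show "norm (ig n w v k z) \<le> exp \<bar>Re v\<bar> * C" .
    qed
    then show "norm (Kint n w v k) \<le> exp \<bar>Re v\<bar> * C" by simp
  qed
qed



lemma U_acoef:
  assumes "w \<noteq> 1"
  shows "U_fun r w v = (if r = 0 then 1 else 0) + w * ((-1)^r * acoef w v r)"
  using U_Lam[OF assms, of r v] Lam_Gf[OF assms, of r v] by (simp add: acoef_def)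

lemma S_Kint: "S_fun n w v = 1 + of_real n * w * Kint n w v 0"
proof -
  have "ig n w v 0 = (\<lambda>z. exp (of_real n * w * (1 - of_real z)) * (of_real z) powr (of_real n + v))"
    by (rule ext) (simp add: ig_def qf_def)
  then show ?thesis by (simp add: S_fun_def Kint_def)
qed

theorem proposition5p1:
  fixes w v :: complex and R :: nat
  assumes "Re w \<le> 1" and "w \<noteq> 1" and "R \<ge> 1"
  shows "(\<lambda>n::real. S_fun n w v - (\<Sum>r<R. U_fun r w v / (of_real n) ^ r))
           \<in> O[at_top](\<lambda>n::real. 1 / (of_real n) ^ R)"
proof -
  obtain B where B: "\<And>n. n > 0 \<and> n + Re v > 0 \<Longrightarrow> norm (Kint n w v (Suc R)) \<le> B"
    using Kint_bound[OF assms(1,2), of v "Suc R"] by blast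
  define C where "C = norm (w * acoef w v R) + norm w * B"
  show ?thesis
  proof (rule bigoI[where c = C])
    have ev: "eventually (\<lambda>n::real. n \<ge> \<bar>Re v\<bar> + 1) at_top" by (rule eventually_ge_at_top)
    show "\<forall>\<^sub>F n in at_top. norm (S_fun n w v - (\<Sum>r<R. U_fun r w v / (of_real n) ^ r)) \<le> C * norm (1 / (complex_of_real n) ^ R)"
      using ev
    proof eventually_elim
      case (elim n)
      have n0: "n > 0" and nv: "n + Re v > 0" using elim by auto
      define N where "N = complex_of_real n"
      have N0: "N \<noteq> 0" using n0 by (simp add: N_def)
      define K where "K = Kint n w v (Suc R)"
      have it: "Kint n w v 0 = (\<Sum>k<Suc R. (-1)^k * acoef w v k / N^(k+1)) + (-1)^(Suc R) * K / N^(Suc R)"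
        using ibp_iter[OF assms(1,2) nv n0, of "Suc R"] by (simp add: N_def K_def)
      have s1: "N * w * (\<Sum>k<Suc R. (-1)^k * acoef w v k / N^(k+1))
          = (\<Sum>k<R. w * ((-1)^k * acoef w v k) / N^k) + w * ((-1)^R * acoef w v R) / N^R"
      proof -
        have t: "N * w * ((-1)^k * acoef w v k / N^(k+1)) = w * ((-1)^k * acoef w v k) / N^k" for k
          using N0 by (simp add: field_simps)
        have "N * w * (\<Sum>k<Suc R. (-1)^k * acoef w v k / N^(k+1)) = (\<Sum>k<Suc R. N * w * ((-1)^k * acoef w v k / N^(k+1)))"
          by (rule sum_distrib_left)
        also have "\<dots> = (\<Sum>k<Suc R. w * ((-1)^k * acoef w v k) / N^k)" unfolding t ..
        also have "\<dots> = (\<Sum>k<R. w * ((-1)^k * acoef w v k) / N^k) + w * ((-1)^R * acoef w v R) / N^R"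
          by (rule sum.lessThan_Suc)
        finally show ?thesis .
      qed
      have s2: "N * w * ((-1)^(Suc R) * K / N^(Suc R)) = w * ((-1)^(Suc R) * K) / N^R"
        using N0 by (simp add: field_simps)
      have s3: "(\<Sum>r<R. U_fun r w v / N ^ r) = (\<Sum>r<R. (if r = 0 then 1 else 0) / N^r) + (\<Sum>r<R. w * ((-1)^r * acoef w v r) / N^r)"
        unfolding U_acoef[OF assms(2)] by (simp add: add_divide_distrib sum.distrib)
      have s4: "(\<Sum>r<R. (if r = 0 then 1 else 0) / N^r) = (1::complex)"
      proof -
        have "(\<Sum>r<R. (if r = 0 then 1 else 0) / N^r) = (\<Sum>r<R. if r = 0 then (1::complex) else 0)"
          by (rule sum.cong) auto
        also have "\<dots> = 1" using assms(3) by (simp add: sum.delta)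
        finally show ?thesis .
      qed
      have diff: "S_fun n w v - (\<Sum>r<R. U_fun r w v / N ^ r) = (w * ((-1)^R * acoef w v R) + w * ((-1)^(Suc R) * K)) / N^R"
        unfolding S_Kint N_def[symmetric] it s3 s4 distrib_left s1 s2 by (simp add: add_divide_distrib diff_divide_distrib)
      have nK: "norm K \<le> B" using B n0 nv by (simp add: K_def)
      have "norm (w * ((-1)^R * acoef w v R) + w * ((-1)^(Suc R) * K)) \<le> C"
      proof -
        have "norm (w * ((-1)^R * acoef w v R) + w * ((-1)^(Suc R) * K))
            \<le> norm (w * ((-1)^R * acoef w v R)) + norm (w * ((-1)^(Suc R) * K))" by (rule norm_triangle_ineq)
        also have "\<dots> = norm (w * acoef w v R) + norm w * norm K" by (simp add: norm_mult norm_power)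
        also have "\<dots> \<le> C" unfolding C_def using nK by (intro add_left_mono mult_left_mono) auto
        finally show ?thesis .
      qed
      then have "norm ((w * ((-1)^R * acoef w v R) + w * ((-1)^(Suc R) * K)) / N^R) \<le> C * norm (1 / N^R)"
        by (simp add: norm_divide divide_right_mono)
      then show ?case unfolding N_def[symmetric] diff .
    qed
  qed
qed


end
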